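(* Suppose Assumption 1 holds. Let $x\in\operatorname{dom}\psi$, let $H$ be a symmetric matrix such that $Q \coloneqq Q^x_H$ is $\sigma$-strongly convex for some $\sigma>0$, and let $d$ satisfy the $\eta$-inexactness condition for $Q$ for some $\eta\in[0,1)$. Then, with $\Delta \coloneqq \nabla f(x)^Td + \psi(x+d)-\psi(x)$, $$\Delta \le -\frac12\left(\frac{1-\sqrt\eta}{1+\sqrt\eta}\,\sigma\|d\|^2 + d^THd\right) \le -\frac12\left(\frac{1-\sqrt\eta}{1+\sqrt\eta}\,\sigma + \lambda_{\min}(H)\right)\|d\|^2.$$ Moreover, if $(1-\sqrt\eta)\sigma + (1+\sqrt\eta)\lambda_{\min}(H) >0$, then for any $\beta,\gamma\in(0,1)$ the backtracking procedure that returns $\alpha=\beta^i$ for the smallest nonnegative integer $i$ with $F(x+\alpha d)\le F(x)+\alpha\gamma\Delta$ terminates after finitely many steps, and the returned $\alpha$ satisfies $$\alpha \ge \min\left\{1,\ \beta(1-\gamma)\frac{(1-\sqrt\eta)\sigma + (1+\sqrt\eta)\lambda_{\min}(H)}{L(1+\sqrt\eta)}\right\}.$$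
   Context: Problem setting: $F(x)=f(x)+\psi(x)$ on $\mathbb{R}^n$. Assumption 1: $f:\mathbb{R}^n\to\mathbb{R}$ is differentiable with $L$-Lipschitz continuous gradient for some $L>0$; $\psi:\mathbb{R}^n\to\mathbb{R}\cup\{+\infty\}$ is convex, proper and closed; $F$ is bounded below; and the solution set $\Omega=\{x: F(x)=F^*\}$, $F^*=\inf F$, is nonempty. For $x\in\mathbb{R}^n$ and a symmetric matrix $H$, $Q^x_H(d) \coloneqq \nabla f(x)^T d + \frac12 d^T H d + \psi(x+d) - \psi(x)$ (so $Q^x_H(0)=0$) and $Q^*\coloneqq\inf_d Q^x_H(d)$. A vector $d$ satisfies the $\eta$-inexactness condition (for $Q=Q^x_H$) if $Q(d)-Q^*\le \eta(Q(0)-Q^* )$, equivalently $Q(d)\le(1-\eta)Q^*$. $\lambda_{\min}(H)$ denotes the smallest eigenvalue of $H$. *)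

theory Defs
  imports "HOL-Analysis.Analysis"
begin

definition epi :: "('a::real_vector \<Rightarrow> ereal) \<Rightarrow> ('a \<times> real) set" where
  "epi \<phi> = {(x, r). \<phi> x \<le> ereal r}"

definition ext_convex :: "('a::real_vector \<Rightarrow> ereal) \<Rightarrow> bool" where
  "ext_convex \<phi> \<longleftrightarrow> convex (epi \<phi>)"

definition ext_proper :: "('a::real_vector \<Rightarrow> ereal) \<Rightarrow> bool" where
  "ext_proper \<phi> \<longleftrightarrow> (\<forall>x. \<phi> x \<noteq> -\<infinity>) \<and> (\<exists>x. \<phi> x \<noteq> \<infinity>)"

definition ext_closed :: "('a::real_normed_vector \<Rightarrow> ereal) \<Rightarrow> bool" where
  "ext_closed \<phi> \<longleftrightarrow> closed (epi \<phi>)"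

definition strongly_convex :: "real \<Rightarrow> ('a::real_normed_vector \<Rightarrow> ereal) \<Rightarrow> bool" where
  "strongly_convex \<sigma> \<phi> \<longleftrightarrow> ext_convex (\<lambda>x. \<phi> x - ereal (\<sigma> / 2 * (norm x)\<^sup>2))"

definition lambda_min :: "real^'n^'n \<Rightarrow> real" where
  "lambda_min H = Min {c. \<exists>v. v \<noteq> 0 \<and> H *v v = c *\<^sub>R v}"

text \<open>The model \<open>Q^x_H(d)\<close>, with gradient \<open>g x = \<nabla>f(x)\<close>.\<close>
definition Qmodel :: "(real^'n \<Rightarrow> real^'n) \<Rightarrow> (real^'n \<Rightarrow> ereal) \<Rightarrow> real^'n^'n
    \<Rightarrow> real^'n \<Rightarrow> real^'n \<Rightarrow> ereal" where
  "Qmodel g \<psi> H x d = ereal (g x \<bullet> d + 1/2 * (d \<bullet> (H *v d))) + \<psi> (x + d) - \<psi> x"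

end

theory Submission
  imports Defs
begin

lemma sym_inner:
  fixes H :: "real^'n^'n"
  assumes "transpose H = H"
  shows "v \<bullet> (H *v w) = (H *v v) \<bullet> w"
proof -
  have "v \<bullet> (H *v w) = (v v* H) \<bullet> w" by (simp add: dot_lmul_matrix)
  also have "v v* H = transpose H *v v" by simp
  finally show ?thesis using assms by simp
qed

lemma eig_finite:
  fixes H :: "real^'n^'n"
  assumes sym: "transpose H = H"
  shows "finite {c. \<exists>v. v \<noteq> 0 \<and> H *v v = c *\<^sub>R v}"
proof (rule ccontr)
  let ?S = "{c. \<exists>v. v \<noteq> 0 \<and> H *v v = c *\<^sub>R v}"
  assume inf: "infinite ?S"
  have "\<exists>B. finite B \<and> card B = Suc CARD('n) \<and> B \<subseteq> ?S"
    by (rule infinite_arbitrarily_large[OF inf])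
  then obtain B where B1: "finite B" and B2: "card B = Suc CARD('n)" and B3: "B \<subseteq> ?S"
    by blast
  define e where "e c = (SOME v. v \<noteq> 0 \<and> H *v v = c *\<^sub>R v)" for c
  have e: "e c \<noteq> 0 \<and> H *v e c = c *\<^sub>R e c" if "c \<in> B" for c
  proof -
    have "c \<in> ?S" using that B3 by (rule subsetD[rotated])
    then have "\<exists>v. v \<noteq> 0 \<and> H *v v = c *\<^sub>R v" by (rule CollectD)
    then show ?thesis unfolding e_def by (rule someI_ex)
  qed
  have orth: "e c \<bullet> e c' = 0" if "c \<in> B" "c' \<in> B" "c \<noteq> c'" for c c'
  proof -
    have ec: "H *v e c = c *\<^sub>R e c" using e[OF that(1)] by (rule conjunct2)
    have ec': "H *v e c' = c' *\<^sub>R e c'" using e[OF that(2)] by (rule conjunct2)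
    have "c * (e c \<bullet> e c') = (H *v e c) \<bullet> e c'" by (simp add: ec)
    also have "\<dots> = e c \<bullet> (H *v e c')" by (rule sym_inner[OF sym, symmetric])
    also have "\<dots> = c' * (e c \<bullet> e c')" by (simp add: ec')
    finally have "(c - c') * (e c \<bullet> e c') = 0" by (simp add: left_diff_distrib)
    then show ?thesis using that(3) by simp
  qed
  have inj: "inj_on e B"
  proof (rule inj_onI)
    fix c c' assume cB: "c \<in> B" and cB': "c' \<in> B" and eq: "e c = e c'"
    have ec: "H *v e c = c *\<^sub>R e c" using e[OF cB] by (rule conjunct2)
    have ne: "e c \<noteq> 0" using e[OF cB] by (rule conjunct1)
    have ec': "H *v e c' = c' *\<^sub>R e c'" using e[OF cB'] by (rule conjunct2)
    have "c *\<^sub>R e c = H *v e c" by (rule ec[symmetric])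
    also have "\<dots> = H *v e c'" by (simp only: eq)
    also have "\<dots> = c' *\<^sub>R e c'" by (rule ec')
    also have "\<dots> = c' *\<^sub>R e c" by (simp only: eq)
    finally have "(c - c') *\<^sub>R e c = 0" by (simp add: scaleR_diff_left)
    then show "c = c'" using ne by simp
  qed
  have po: "pairwise orthogonal (e ` B)"
  proof (rule pairwiseI)
    fix x y assume "x \<in> e ` B" "y \<in> e ` B" "x \<noteq> y"
    then obtain c c' where "c \<in> B" "c' \<in> B" "x = e c" "y = e c'" by blast
    moreover have "c \<noteq> c'" using calculation \<open>x \<noteq> y\<close> by blast
    ultimately show "orthogonal x y" unfolding orthogonal_def using orth by blast
  qed
  have z: "0 \<notin> e ` B"
  proof
    assume "0 \<in> e ` B"
    then obtain c where cB: "c \<in> B" and "0 = e c" by blast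
    then show False using e[OF cB] by simp
  qed
  have "independent (e ` B)" by (rule pairwise_orthogonal_independent[OF po z])
  then have "card (e ` B) \<le> DIM(real^'n)" using independent_bound by blast
  moreover have "card (e ` B) = card B" by (rule card_image[OF inj])
  moreover have "DIM(real^'n) = CARD('n)" by simp
  ultimately show False using B2 by linarith
qed


lemma lambda_min_le:
  fixes H :: "real^'n^'n"
  assumes sym: "transpose H = H"
  shows "lambda_min H * (norm d)^2 \<le> d \<bullet> (H *v d)"
proof -
  let ?S = "sphere (0::real^'n) 1"
  have c1: "compact ?S" by (rule compact_sphere)
  have c2: "?S \<noteq> {}" by (simp add: sphere_eq_empty)
  have c3: "continuous_on ?S (\<lambda>v. v \<bullet> (H *v v))"
    by (intro continuous_on_inner continuous_on_id matrix_vector_mult_linear_continuous_on)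
  obtain v where v1: "v \<in> ?S" and v2: "\<forall>w\<in>?S. v \<bullet> (H *v v) \<le> w \<bullet> (H *v w)"
    using continuous_attains_inf[OF c1 c2 c3] by blast
  have v: "v \<in> ?S" "\<And>w. w \<in> ?S \<Longrightarrow> v \<bullet> (H *v v) \<le> w \<bullet> (H *v w)" using v1 v2 by auto
  define \<mu> where "\<mu> = v \<bullet> (H *v v)"
  have gen: "\<mu> * (norm w)^2 \<le> w \<bullet> (H *v w)" for w
  proof (cases "w = 0")
    case True then show ?thesis by simp
  next
    case False
    let ?u = "(1 / norm w) *\<^sub>R w"
    have "?u \<in> ?S" using False by simp
    then have "\<mu> \<le> ?u \<bullet> (H *v ?u)" using v(2) \<mu>_def by blast
    also have "\<dots> = (w \<bullet> (H *v w)) / (norm w)^2"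
      by (simp add: matrix_vector_mult_scaleR power2_eq_square)
    finally show ?thesis using False by (simp add: field_simps)
  qed
  have nv: "norm v = 1" using v(1) by simp
  define r where "r = H *v v - \<mu> *\<^sub>R v"
  have B: "w \<bullet> (H *v w) - \<mu> * (w \<bullet> w) \<ge> 0" for w
    using gen[of w] by (simp add: power2_norm_eq_inner)
  have "r = 0"
  proof -
    have key: "2 * t * (r \<bullet> r) + t^2 * (r \<bullet> (H *v r) - \<mu> * (r \<bullet> r)) \<ge> 0" for t
    proof -
      have B0: "0 \<le> (v + t *\<^sub>R r) \<bullet> (H *v (v + t *\<^sub>R r)) - \<mu> * ((v + t *\<^sub>R r) \<bullet> (v + t *\<^sub>R r))"
        by (rule B)
      have ex1: "(v + t *\<^sub>R r) \<bullet> (H *v (v + t *\<^sub>R r))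
          = v \<bullet> (H *v v) + t * (v \<bullet> (H *v r)) + t * (r \<bullet> (H *v v)) + t^2 * (r \<bullet> (H *v r))"
        by (simp add: matrix_vector_right_distrib matrix_vector_mult_scaleR inner_add_left inner_add_right
            power2_eq_square algebra_simps)
      have ex2: "(v + t *\<^sub>R r) \<bullet> (v + t *\<^sub>R r) = v \<bullet> v + 2 * t * (v \<bullet> r) + t^2 * (r \<bullet> r)"
        by (simp add: inner_add_left inner_add_right inner_commute[of r v] power2_eq_square algebra_simps)
      have f0: "v \<bullet> (H *v v) = \<mu> * (v \<bullet> v)"
        using nv \<mu>_def by (simp add: power2_norm_eq_inner[symmetric])
      have f1: "v \<bullet> (H *v r) = r \<bullet> (H *v v)"
        using sym_inner[OF sym, of v r] inner_commute[of "H *v v" r] by simp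
      have f2: "r \<bullet> r = r \<bullet> (H *v v) - \<mu> * (v \<bullet> r)"
      proof -
        have "r \<bullet> r = r \<bullet> (H *v v - \<mu> *\<^sub>R v)" by (simp only: r_def[symmetric])
        then show ?thesis by (simp add: inner_diff_right inner_commute[of r v])
      qed
      show ?thesis
        using B0 unfolding ex1 ex2 f0 f1 f2 by (simp add: algebra_simps)
    qed
    let ?a = "r \<bullet> r" and ?b = "r \<bullet> (H *v r) - \<mu> * (r \<bullet> r)"
    show ?thesis
    proof (rule ccontr)
      assume "r \<noteq> 0"
      then have a: "?a > 0" by simp
      define t where "t = - ?a / (?b + 1)"
      have b: "?b \<ge> 0" by (rule B)
      have "2 * t * ?a + t^2 * ?b \<ge> 0" by (rule key)
      moreover have "2 * t * ?a + t^2 * ?b < 0"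
      proof -
        have "t^2 * ?b \<le> t^2 * (?b + 1)" by (simp add: mult_left_mono)
        also have "t^2 * (?b + 1) = - t * ?a"
        proof -
          have bn: "?b + 1 \<noteq> 0" using b by linarith
          have tb: "t * (?b + 1) = - ?a" unfolding t_def using bn by simp
          have "t^2 * (?b + 1) = t * (t * (?b + 1))" by (simp add: power2_eq_square)
          then show ?thesis using tb by simp
        qed
        finally have "2 * t * ?a + t^2 * ?b \<le> t * ?a" by simp
        also have "t * ?a < 0"
        proof -
          have "t < 0" unfolding t_def using a b by (intro divide_neg_pos) auto
          then show ?thesis using a by (simp add: mult_neg_pos)
        qed
        finally show ?thesis .
      qed
      ultimately show False by simp
    qed
  qed
  then have Hv: "H *v v = \<mu> *\<^sub>R v" unfolding r_def by simp
  have "v \<noteq> 0" using nv by auto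
  with Hv have "\<mu> \<in> {c. \<exists>v. v \<noteq> 0 \<and> H *v v = c *\<^sub>R v}" by blast
  then have "lambda_min H \<le> \<mu>" unfolding lambda_min_def by (rule Min_le[OF eig_finite[OF sym]])
  then have "lambda_min H * (norm d)^2 \<le> \<mu> * (norm d)^2" by (rule mult_right_mono) simp
  then show ?thesis using gen[of d] by linarith
qed


lemma descent:
  fixes f :: "real^'n \<Rightarrow> real" and g :: "real^'n \<Rightarrow> real^'n"
  assumes grad: "\<And>y. (f has_derivative (\<lambda>h. g y \<bullet> h)) (at y)"
    and Lip: "L-lipschitz_on UNIV g" and a: "0 \<le> \<alpha>"
  shows "f (x + \<alpha> *\<^sub>R d) \<le> f x + \<alpha> * (g x \<bullet> d) + L / 2 * \<alpha>^2 * (norm d)^2"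
proof -
  define \<phi> where "\<phi> t = f (x + t *\<^sub>R d) - t * (g x \<bullet> d) - L / 2 * t^2 * (norm d)^2" for t
  have D: "(\<phi> has_real_derivative (g (x + t *\<^sub>R d) \<bullet> d - g x \<bullet> d - L * t * (norm d)^2)) (at t)" for t
  proof -
    have l: "((\<lambda>t. x + t *\<^sub>R d) has_derivative (\<lambda>h. h *\<^sub>R d)) (at t)"
      by (auto intro!: derivative_eq_intros)
    have c: "((\<lambda>t. f (x + t *\<^sub>R d)) has_derivative (\<lambda>h. g (x + t *\<^sub>R d) \<bullet> (h *\<^sub>R d))) (at t)"
      using has_derivative_compose[OF l grad] by simp
    have eq: "(\<lambda>h. g (x + t *\<^sub>R d) \<bullet> (h *\<^sub>R d)) = (*) (g (x + t *\<^sub>R d) \<bullet> d)"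
      by (rule ext) simp
    have c': "((\<lambda>t. f (x + t *\<^sub>R d)) has_real_derivative (g (x + t *\<^sub>R d) \<bullet> d)) (at t)"
      using c unfolding eq has_field_derivative_def .
    show ?thesis unfolding \<phi>_def
      by (rule derivative_eq_intros c' refl | simp)+
  qed
  have nonpos: "g (x + t *\<^sub>R d) \<bullet> d - g x \<bullet> d - L * t * (norm d)^2 \<le> 0" if "0 \<le> t" for t
  proof -
    have "g (x + t *\<^sub>R d) \<bullet> d - g x \<bullet> d = (g (x + t *\<^sub>R d) - g x) \<bullet> d" by (simp add: inner_diff_left)
    also have "\<dots> \<le> norm (g (x + t *\<^sub>R d) - g x) * norm d" by (rule norm_cauchy_schwarz)
    also have "norm (g (x + t *\<^sub>R d) - g x) \<le> L * (t * norm d)"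
      using lipschitz_onD[OF Lip, of "x + t *\<^sub>R d" x] that by (simp add: dist_norm)
    then have "norm (g (x + t *\<^sub>R d) - g x) * norm d \<le> L * (t * norm d) * norm d"
      by (simp add: mult_right_mono)
    finally show ?thesis by (simp add: power2_eq_square algebra_simps)
  qed
  have "\<phi> \<alpha> \<le> \<phi> 0"
    by (rule DERIV_nonpos_imp_nonincreasing[OF a]) (use D nonpos in blast)
  then show ?thesis unfolding \<phi>_def by simp
qed

lemma affine_minorant:
  fixes h :: "real^'n \<Rightarrow> ereal"
  assumes cv: "convex (epi h)" and cl: "closed (epi h)" and h0: "h z0 = ereal r0"
  shows "\<exists>a c. \<forall>y. ereal (a \<bullet> y + c) \<le> h y"
proof -
  have "(z0, r0 - 1) \<notin> epi h" using h0 by (simp add: epi_def)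
  then obtain p b where pb: "p \<bullet> (z0, r0 - 1) < b" "\<And>q. q \<in> epi h \<Longrightarrow> b < p \<bullet> q"
    using separating_hyperplane_closed_point[OF cv cl] by blast
  obtain u w where p: "p = (u, w)" by (cases p)
  have mem0: "(z0, r0) \<in> epi h" using h0 by (simp add: epi_def)
  have "b < u \<bullet> z0 + w * r0" using pb(2)[OF mem0] p by (simp add: inner_Pair)
  moreover have "u \<bullet> z0 + w * (r0 - 1) < b" using pb(1) p by (simp add: inner_Pair)
  ultimately have w: "w > 0" by (simp add: algebra_simps)
  have "ereal ((- u /\<^sub>R w) \<bullet> y + b / w) \<le> h y" for y
  proof (cases "h y")
    case (real r)
    then have mem: "(y, r) \<in> epi h" by (simp add: epi_def)
    have "b < u \<bullet> y + w * r" using pb(2)[OF mem] p by (simp add: inner_Pair)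
    then have "(- u /\<^sub>R w) \<bullet> y + b / w \<le> r" using w by (simp add: field_simps)
    then show ?thesis using real by simp
  next
    case PInf then show ?thesis by simp
  next
    case MInf
    have mem: "(y, t) \<in> epi h" for t using MInf by (simp add: epi_def)
    have "b < u \<bullet> y + w * t" for t using pb(2)[OF mem] p by (simp add: inner_Pair)
    from this[of "(b - u \<bullet> y - 1) / w"] w show ?thesis by (simp add: field_simps)
  qed
  then show ?thesis by blast
qed

lemma quad_lower:
  fixes a y :: "real^'n"
  assumes "\<sigma> > 0"
  shows "c - (norm a)^2 / (2 * \<sigma>) \<le> a \<bullet> y + c + \<sigma> / 2 * (norm y)^2"
proof -
  have "- (norm a * norm y) \<le> a \<bullet> y"
    using norm_cauchy_schwarz[of "-a" y] by simp
  moreover have "0 \<le> (\<sigma> * norm y - norm a)^2 / (2 * \<sigma>)" using assms by simp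
  moreover have "(\<sigma> * norm y - norm a)^2 / (2 * \<sigma>) = \<sigma> / 2 * (norm y)^2 - norm a * norm y + (norm a)^2 / (2 * \<sigma>)"
    using assms by (simp add: power2_eq_square field_simps)
  ultimately show ?thesis by linarith
qed

theorem lemma3:
  fixes f :: "real^'n \<Rightarrow> real" and g :: "real^'n \<Rightarrow> real^'n"
    and \<psi> :: "real^'n \<Rightarrow> ereal" and L :: real
    and x d :: "real^'n" and H :: "real^'n^'n" and \<sigma> \<eta> :: real
  defines "F \<equiv> (\<lambda>y. ereal (f y) + \<psi> y)"
    and "Q \<equiv> Qmodel g \<psi> H x"
    and "\<Delta> \<equiv> ereal (g x \<bullet> d) + \<psi> (x + d) - \<psi> x"
  assumes grad: "\<And>y. (f has_derivative (\<lambda>h. g y \<bullet> h)) (at y)"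
    and Lpos: "L > 0" and Lip: "L-lipschitz_on UNIV g"
    and psi_convex: "ext_convex \<psi>" and psi_proper: "ext_proper \<psi>" and psi_closed: "ext_closed \<psi>"
    and F_bdd: "bdd_below (range F)"
    and Omega_ne: "\<exists>y. F y = Inf (range F)"
    and x_dom: "\<psi> x \<noteq> \<infinity>"
    and H_sym: "transpose H = H"
    and sigma_pos: "\<sigma> > 0" and Q_sc: "strongly_convex \<sigma> Q"
    and eta: "0 \<le> \<eta>" "\<eta> < 1"
    and inexact: "Q d - Inf (range Q) \<le> ereal \<eta> * (Q 0 - Inf (range Q))"
  shows "\<Delta> \<le> ereal (- 1/2 * ((1 - sqrt \<eta>) / (1 + sqrt \<eta>) * \<sigma> * (norm d)\<^sup>2 + d \<bullet> (H *v d)))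
    \<and> - 1/2 * ((1 - sqrt \<eta>) / (1 + sqrt \<eta>) * \<sigma> * (norm d)\<^sup>2 + d \<bullet> (H *v d))
        \<le> - 1/2 * ((1 - sqrt \<eta>) / (1 + sqrt \<eta>) * \<sigma> + lambda_min H) * (norm d)\<^sup>2
    \<and> ((1 - sqrt \<eta>) * \<sigma> + (1 + sqrt \<eta>) * lambda_min H > 0 \<longrightarrow>
        (\<forall>\<beta> \<gamma>. 0 < \<beta> \<and> \<beta> < 1 \<and> 0 < \<gamma> \<and> \<gamma> < 1 \<longrightarrow>
          (\<exists>i::nat. F (x + \<beta> ^ i *\<^sub>R d) \<le> F x + ereal (\<beta> ^ i * \<gamma>) * \<Delta>) \<and>
          \<beta> ^ (LEAST i::nat. F (x + \<beta> ^ i *\<^sub>R d) \<le> F x + ereal (\<beta> ^ i * \<gamma>) * \<Delta>)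
            \<ge> min 1 (\<beta> * (1 - \<gamma>) * ((1 - sqrt \<eta>) * \<sigma> + (1 + sqrt \<eta>) * lambda_min H)
                       / (L * (1 + sqrt \<eta>)))))"
proof -
  define r where "r = sqrt \<eta>"
  define k where "k = (1 - r) / (1 + r)"
  have r0: "0 \<le> r" and r1: "r < 1" and rr: "\<eta> = r^2"
    using eta unfolding r_def by (auto simp: real_sqrt_lt_1_iff)
  have nminf: "\<And>y. \<psi> y \<noteq> -\<infinity>" using psi_proper unfolding ext_proper_def by blast
  obtain px where px: "\<psi> x = ereal px" using x_dom nminf by (cases "\<psi> x") auto
  define p :: "real^'n \<Rightarrow> real" where "p y = g x \<bullet> y + 1/2 * (y \<bullet> (H *v y))" for y
  have Qy: "Q y = ereal (p y) + \<psi> (x + y) - ereal px" for y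
    unfolding Q_def Qmodel_def p_def px ..
  have Q0: "Q 0 = 0" using Qy[of 0] px by (simp add: p_def)
  define s :: "real^'n \<Rightarrow> real" where "s y = \<sigma> / 2 * (norm y)^2" for y
  define h :: "real^'n \<Rightarrow> ereal" where "h y = Q y - ereal (s y)" for y
  have cvh: "convex (epi h)"
    using Q_sc unfolding strongly_convex_def ext_convex_def h_def s_def .
  have Qh: "Q y = h y + ereal (s y)" for y unfolding h_def by (cases "Q y") auto
  have hiff: "h y \<le> ereal r' \<longleftrightarrow> \<psi> (x + y) \<le> ereal (r' + s y - p y + px)" for y r'
    using nminf[of "x + y"] by (cases "\<psi> (x + y)") (auto simp: h_def Qy)
  have epih: "epi h = (\<lambda>q. (x + fst q, snd q + s (fst q) - p (fst q) + px)) -` epi \<psi>"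
    using hiff by (auto simp: epi_def)
  have clh: "closed (epi h)"
    unfolding epih
  proof (rule continuous_closed_vimage)
    show "closed (epi \<psi>)" using psi_closed unfolding ext_closed_def .
    fix q :: "(real^'n) \<times> real"
    have cH: "continuous (at q) (\<lambda>q. H *v fst q)"
      by (rule bounded_linear.continuous[OF matrix_vector_mul_bounded_linear]) (intro continuous_intros)
    show "continuous (at q) (\<lambda>q. (x + fst q, snd q + s (fst q) - p (fst q) + px))"
      unfolding s_def p_def by (intro continuous_intros cH)
  qed
  have h0: "h 0 = ereal 0" by (simp add: h_def Q0 s_def)
  obtain a c where ac: "\<And>y. ereal (a \<bullet> y + c) \<le> h y"
    using affine_minorant[OF cvh clh h0] by blast
  define m0 where "m0 = c - (norm a)^2 / (2 * \<sigma>)"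
  have lowQ: "ereal m0 \<le> Q y" for y
  proof -
    have "ereal m0 \<le> ereal (a \<bullet> y + c) + ereal (s y)"
      using quad_lower[OF sigma_pos, of c a y] by (simp add: m0_def s_def)
    also have "\<dots> \<le> h y + ereal (s y)" by (rule add_right_mono[OF ac])
    finally show ?thesis using Qh by simp
  qed
  define Qs where "Qs = Inf (range Q)"
  have "ereal m0 \<le> Qs" unfolding Qs_def by (rule INF_greatest) (rule lowQ)
  moreover have "Qs \<le> 0" unfolding Qs_def using INF_lower[of 0 UNIV Q] Q0 by simp
  ultimately obtain m where m: "Qs = ereal m" and m0: "m \<le> 0" by (cases Qs) auto
  have mle: "ereal m \<le> Q y" for y using INF_lower[of y UNIV Q] m unfolding Qs_def by simp
  have inex: "Q d - ereal m \<le> ereal (- \<eta> * m)"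
    using inexact unfolding Qs_def[symmetric] m Q0 by simp
  have "\<psi> (x + d) \<noteq> \<infinity>"
  proof
    assume "\<psi> (x + d) = \<infinity>"
    then have "Q d = \<infinity>" by (simp add: Qy)
    then show False using inex by simp
  qed
  then obtain pd where pd: "\<psi> (x + d) = ereal pd" using nminf[of "x + d"] by (cases "\<psi> (x + d)") auto
  define qd where "qd = p d + pd - px"
  have Qd: "Q d = ereal qd" by (simp add: Qy pd qd_def)
  have i1: "qd \<le> (1 - \<eta>) * m" using inex by (simp add: Qd algebra_simps)
  define nd where "nd = (norm d)^2"
  have nd0: "0 \<le> nd" by (simp add: nd_def)
  have sc: "m \<le> t * (qd - \<sigma> / 2 * nd) + \<sigma> / 2 * t^2 * nd" if t: "0 \<le> t" "t \<le> 1" for t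
  proof -
    have hd: "h d = ereal (qd - s d)" by (simp add: h_def Qd)
    have "(d, qd - s d) \<in> epi h" "(0, 0) \<in> epi h" using hd h0 by (auto simp: epi_def)
    then have "t *\<^sub>R (d, qd - s d) + (1 - t) *\<^sub>R (0, 0) \<in> epi h"
      by (rule convexD[OF cvh]) (use t in auto)
    then have "h (t *\<^sub>R d) \<le> ereal (t * (qd - s d))" by (simp add: epi_def)
    then have "Q (t *\<^sub>R d) \<le> ereal (t * (qd - s d)) + ereal (s (t *\<^sub>R d))"
      unfolding Qh by (rule add_right_mono)
    from order_trans[OF mle[of "t *\<^sub>R d"] this] have "m \<le> t * (qd - s d) + s (t *\<^sub>R d)" by simp
    then show ?thesis by (simp add: s_def nd_def power_mult_distrib)
  qed
  have key: "qd \<le> - (k * \<sigma> / 2 * nd)"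
  proof (cases "r = 0")
    case True
    then have "\<eta> = 0" using rr by simp
    then have qm: "qd \<le> m" using i1 by simp
    show ?thesis
    proof -
      have "\<sigma> / 2 * nd \<le> - qd"
      proof (rule field_le_mult_one_interval)
        fix z :: real assume z: "0 < z" "z < 1"
        have "qd \<le> z * (qd - \<sigma> / 2 * nd) + \<sigma> / 2 * z^2 * nd" using sc[of z] z qm by simp
        moreover have "(1 - z) * (- (z * (\<sigma> / 2 * nd))) - (1 - z) * qd
            = z * (qd - \<sigma> / 2 * nd) + \<sigma> / 2 * z^2 * nd - qd"
          by (simp add: power2_eq_square field_simps)
        ultimately have "(1 - z) * qd \<le> (1 - z) * (- (z * (\<sigma> / 2 * nd)))"
          by linarith
        then have "qd \<le> - (z * (\<sigma> / 2 * nd))"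
          by (rule mult_left_le_imp_le) (use z in simp)
        then show "z * (\<sigma> / 2 * nd) \<le> - qd" by linarith
      qed
      then show ?thesis using True by (simp add: k_def)
    qed
  next
    case False
    then have rp: "r > 0" using r0 by simp
    define t where "t = 1 / (1 + r)"
    have t01: "0 \<le> t" "t \<le> 1" using r0 unfolding t_def by auto
    have e1: "(1 - \<eta>) * t = 1 - r" unfolding t_def rr using r0
      by (simp add: power2_eq_square field_simps)
    have rn: "1 + r \<noteq> 0" using r0 by simp
    have h1: "(1 + r) * t = 1" unfolding t_def using rn by simp
    have ee: "1 - \<eta> = (1 - r) * (1 + r)" unfolding rr by (simp add: power2_eq_square algebra_simps)
    have e2a: "(1 - r) * (1 + r) * (t - t^2) - (1 - r) * r * t = (1 - r) * t * (1 - (1 + r) * t)"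
      by (simp add: power2_eq_square algebra_simps)
    have e2: "(1 - \<eta>) * (t - t^2) = (1 - r) * r * t" using e2a unfolding ee h1 by simp
    have "qd \<le> (1 - \<eta>) * m" by (rule i1)
    also have "\<dots> \<le> (1 - \<eta>) * (t * (qd - \<sigma> / 2 * nd) + \<sigma> / 2 * t^2 * nd)"
      using sc[OF t01] eta by (simp add: mult_left_mono)
    also have "\<dots> = ((1 - \<eta>) * t) * qd - ((1 - \<eta>) * (t - t^2)) * (\<sigma> / 2 * nd)"
      by (simp add: field_simps)
    also have "\<dots> = (1 - r) * qd - (1 - r) * r * t * (\<sigma> / 2 * nd)" unfolding e1 e2 ..
    finally have A: "qd \<le> (1 - r) * qd - (1 - r) * r * t * (\<sigma> / 2 * nd)" .
    have A2: "(1 - r) * qd = qd - r * qd" by (simp add: algebra_simps)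
    have A3: "(1 - r) * r * t * (\<sigma> / 2 * nd) = r * ((1 - r) * t * (\<sigma> / 2 * nd))" by (simp add: ac_simps)
    have "r * qd \<le> r * ((1 - r) * t * (\<sigma> / 2 * nd)) * (-1)" using A A2 A3 by linarith
    then have "r * qd \<le> r * (- ((1 - r) * t * (\<sigma> / 2 * nd)))" by simp
    then have "qd \<le> - ((1 - r) * t * (\<sigma> / 2 * nd))"
      by (rule mult_left_le_imp_le) (use rp in simp)
    then show ?thesis unfolding t_def k_def by simp
  qed
  have Dl: "\<Delta> = ereal (g x \<bullet> d + pd - px)" unfolding \<Delta>_def pd px by simp
  define \<delta> where "\<delta> = g x \<bullet> d + pd - px"
  have dq: "\<delta> = qd - 1/2 * (d \<bullet> (H *v d))" unfolding \<delta>_def qd_def p_def by simp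
  have part1: "\<delta> \<le> - 1/2 * (k * \<sigma> * nd + d \<bullet> (H *v d))"
  proof -
    have e: "- 1/2 * (k * \<sigma> * nd + d \<bullet> (H *v d)) = - (k * \<sigma> / 2 * nd) - 1/2 * (d \<bullet> (H *v d))"
      by (simp add: algebra_simps)
    show ?thesis using key dq e by linarith
  qed
  have lam: "lambda_min H * nd \<le> d \<bullet> (H *v d)" unfolding nd_def by (rule lambda_min_le[OF H_sym])
  have part2: "- 1/2 * (k * \<sigma> * nd + d \<bullet> (H *v d))
        \<le> - 1/2 * (k * \<sigma> + lambda_min H) * nd"
    using lam by (simp add: algebra_simps)
  have part3: "((1 - r) * \<sigma> + (1 + r) * lambda_min H > 0 \<longrightarrow>
        (\<forall>\<beta> \<gamma>. 0 < \<beta> \<and> \<beta> < 1 \<and> 0 < \<gamma> \<and> \<gamma> < 1 \<longrightarrow>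
          (\<exists>i::nat. F (x + \<beta> ^ i *\<^sub>R d) \<le> F x + ereal (\<beta> ^ i * \<gamma>) * \<Delta>) \<and>
          \<beta> ^ (LEAST i::nat. F (x + \<beta> ^ i *\<^sub>R d) \<le> F x + ereal (\<beta> ^ i * \<gamma>) * \<Delta>)
            \<ge> min 1 (\<beta> * (1 - \<gamma>) * ((1 - r) * \<sigma> + (1 + r) * lambda_min H)
                       / (L * (1 + r)))))"
  proof (intro impI allI)
    fix \<beta> \<gamma> :: real
    assume Kpos0: "(1 - r) * \<sigma> + (1 + r) * lambda_min H > 0"
    assume bg: "0 < \<beta> \<and> \<beta> < 1 \<and> 0 < \<gamma> \<and> \<gamma> < 1"
    define K where "K = k * \<sigma> + lambda_min H"
    have Keq: "(1 - r) * \<sigma> + (1 + r) * lambda_min H = (1 + r) * K"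
      unfolding K_def k_def using r0 by (simp add: field_simps)
    have Kpos: "K > 0" using Kpos0 r0 unfolding Keq by (simp add: zero_less_mult_iff)
    have dK: "\<delta> \<le> - 1/2 * K * nd" using part1 part2 unfolding K_def by linarith
    have Fx: "F x = ereal (f x + px)" unfolding F_def px by simp
    have suff: "F (x + \<alpha> *\<^sub>R d) \<le> F x + ereal (\<alpha> * \<gamma>) * \<Delta>"
      if al: "0 < \<alpha>" "\<alpha> \<le> 1" "\<alpha> \<le> (1 - \<gamma>) * K / L" for \<alpha>
    proof -
      have "(x + d, pd) \<in> epi \<psi>" "(x, px) \<in> epi \<psi>" using pd px by (auto simp: epi_def)
      then have "\<alpha> *\<^sub>R (x + d, pd) + (1 - \<alpha>) *\<^sub>R (x, px) \<in> epi \<psi>"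
        by (rule convexD[OF psi_convex[unfolded ext_convex_def]]) (use al in auto)
      moreover have "\<alpha> *\<^sub>R (x + d) + (1 - \<alpha>) *\<^sub>R x = x + \<alpha> *\<^sub>R d"
        by (simp add: algebra_simps)
      ultimately have ps: "\<psi> (x + \<alpha> *\<^sub>R d) \<le> ereal (\<alpha> * pd + (1 - \<alpha>) * px)"
        by (simp add: epi_def)
      have fs: "f (x + \<alpha> *\<^sub>R d) \<le> f x + \<alpha> * (g x \<bullet> d) + L / 2 * \<alpha>^2 * nd"
        unfolding nd_def using descent[OF grad Lip] al by simp
      have "L * \<alpha> \<le> (1 - \<gamma>) * K" using al(3) Lpos by (simp add: field_simps)
      then have "L * \<alpha> * nd \<le> (1 - \<gamma>) * K * nd" using nd0 by (simp add: mult_right_mono)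
      also have "(1 - \<gamma>) * K * nd \<le> (1 - \<gamma>) * (- 2 * \<delta>)"
      proof -
        have "K * nd \<le> - 2 * \<delta>" using dK by linarith
        from mult_left_mono[OF this, of "1 - \<gamma>"] bg show ?thesis by (simp add: mult.assoc)
      qed
      finally have Z: "L * \<alpha> * nd \<le> (1 - \<gamma>) * (- 2 * \<delta>)" .
      have Z1: "L * \<alpha> * nd = 2 * (L / 2 * \<alpha> * nd)" by simp
      have Z2: "(1 - \<gamma>) * (- 2 * \<delta>) = 2 * ((1 - \<gamma>) * (- \<delta>))" by simp
      have "L / 2 * \<alpha> * nd \<le> (1 - \<gamma>) * (- \<delta>)" using Z Z1 Z2 by linarith
      then have Y: "\<alpha> * (L / 2 * \<alpha> * nd) \<le> \<alpha> * ((1 - \<gamma>) * (- \<delta>))"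
        by (rule mult_left_mono) (use al in simp)
      have E1: "L / 2 * \<alpha>^2 * nd = \<alpha> * (L / 2 * \<alpha> * nd)" by (simp add: power2_eq_square algebra_simps)
      have E2: "\<alpha> * ((1 - \<gamma>) * (- \<delta>)) = \<alpha> * \<gamma> * \<delta> - \<alpha> * \<delta>" by (simp add: algebra_simps)
      have E3: "\<alpha> * \<delta> = \<alpha> * (g x \<bullet> d) + \<alpha> * pd - \<alpha> * px" unfolding \<delta>_def by (simp add: algebra_simps)
      have E4: "(1 - \<alpha>) * px = px - \<alpha> * px" by (simp add: algebra_simps)
      have real: "f (x + \<alpha> *\<^sub>R d) + (\<alpha> * pd + (1 - \<alpha>) * px) \<le> f x + px + \<alpha> * \<gamma> * \<delta>"
        using fs Y E1 E2 E3 E4 by linarith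
      have "F (x + \<alpha> *\<^sub>R d) \<le> ereal (f (x + \<alpha> *\<^sub>R d)) + ereal (\<alpha> * pd + (1 - \<alpha>) * px)"
        unfolding F_def by (rule add_left_mono[OF ps])
      also have "\<dots> \<le> ereal (f x + px + \<alpha> * \<gamma> * \<delta>)" using real by simp
      also have "\<dots> = F x + ereal (\<alpha> * \<gamma>) * \<Delta>" unfolding Fx Dl \<delta>_def by simp
      finally show ?thesis .
    qed
    let ?P = "\<lambda>i::nat. F (x + \<beta> ^ i *\<^sub>R d) \<le> F x + ereal (\<beta> ^ i * \<gamma>) * \<Delta>"
    have bpos: "0 < \<beta> ^ i" "\<beta> ^ i \<le> 1" for i using bg by (auto simp: power_le_one)
    have "(1 - \<gamma>) * K / L > 0" using bg Kpos Lpos by simp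
    moreover have "(\<lambda>n. \<beta> ^ n) \<longlonglongrightarrow> 0" using bg by (intro LIMSEQ_power_zero) simp
    ultimately have "\<forall>\<^sub>F n in sequentially. \<beta> ^ n < (1 - \<gamma>) * K / L"
      by (metis order_tendstoD(2))
    then obtain i0 where "\<beta> ^ i0 < (1 - \<gamma>) * K / L" by (auto simp: eventually_sequentially)
    then have Pi0: "?P i0" using suff[of "\<beta> ^ i0"] bpos by simp
    then have ex: "\<exists>i. ?P i" by blast
    define k where "k = (LEAST i. ?P i)"
    have target: "\<beta> * (1 - \<gamma>) * ((1 - r) * \<sigma> + (1 + r) * lambda_min H) / (L * (1 + r))
        = \<beta> * ((1 - \<gamma>) * K / L)"
    proof -
      have "0 \<le> L * r" using Lpos r0 by simp
      then have LL1: "L + L * r \<noteq> 0" using Lpos by linarith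
      then have LL2: "L * (1 + r) \<noteq> 0" by (simp add: algebra_simps)
      have LL3: "L \<noteq> 0" "1 + r \<noteq> 0" using Lpos r0 by linarith+
      note LL = LL1 LL2 LL3
      show ?thesis unfolding Keq using LL by (simp add: field_simps)
    qed
    have "min 1 (\<beta> * ((1 - \<gamma>) * K / L)) \<le> \<beta> ^ k"
    proof (cases k)
      case 0 then show ?thesis by simp
    next
      case (Suc j)
      have "\<not> ?P j" unfolding k_def using not_less_Least[of j ?P] Suc k_def by simp
      then have "\<not> \<beta> ^ j \<le> (1 - \<gamma>) * K / L" using suff[of "\<beta> ^ j"] bpos[of j] by auto
      then have "(1 - \<gamma>) * K / L \<le> \<beta> ^ j" by simp
      then have "\<beta> * ((1 - \<gamma>) * K / L) \<le> \<beta> * \<beta> ^ j"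
        by (rule mult_left_mono) (use bg in simp)
      then show ?thesis using Suc by simp
    qed
    then show "(\<exists>i. ?P i) \<and> \<beta> ^ (LEAST i. ?P i)
            \<ge> min 1 (\<beta> * (1 - \<gamma>) * ((1 - r) * \<sigma> + (1 + r) * lambda_min H) / (L * (1 + r)))"
      using ex unfolding target k_def by simp
  qed
  show ?thesis
    using part1 part2 part3 Dl unfolding r_def nd_def k_def \<delta>_def[symmetric] by simp
qed

end
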